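(* Let $F_1,\ldots,F_m$ be subsets of $[n]$ with $|F_i|=d$ for all $i$, and let $\Delta$ be the simplicial complex they generate. Let $m_i=\prod_{j\in F_i}X_j$ and $$f(X_1,\ldots,X_n,Y_1,\ldots,Y_m)=\sum_{i=1}^m Y_i\, m_i(X_1,\ldots,X_n)\in\mathbb{Q}[X_1,\ldots,X_n,Y_1,\ldots,Y_m].$$ Then a basis of the linear space $\partial^+ f$ consists of the following $2|\Delta|$ polynomials: (i) the $|\Delta|$ monomials $\prod_{j\in F}X_j$ for $F$ a face of $\Delta$; (ii) the $|\Delta|$ polynomials $\partial f/\partial F$ for $F$ a face of $\Delta$, where $\partial f/\partial F$ is obtained from $f$ by differentiating once with respect to each variable $X_j$ with $j\in F$. In particular $\dim\partial^+ f=2|\Delta|$.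
   Context: The simplicial complex generated by $F_1,\ldots,F_m\subseteq[n]$ is the family $\Delta$ of all nonempty $Y\subseteq[n]$ with $Y\subseteq F_i$ for some $i$; its elements are called faces and $|\Delta|$ is their number. For a polynomial $f$, $\partial^+ f$ denotes the linear space spanned by the partial derivatives of $f$ of order $r$ for all $r$ with $1\le r\le\deg(f)-1$. *)

theory Defs
  imports Complex_Main "HOL-Library.Poly_Mapping" "HOL-Library.Function_Algebras"
begin

text \<open>Variables: Inl j is X_j, Inr i is Y_i. Monomials are finitely supported
exponent maps; a polynomial over Q is its coefficient function (monomial to rat).
Polynomials live in the Q-vector space of all such functions (pointwise operations).\<close>

type_synonym var = "nat + nat"
type_synonym mon = "var \<Rightarrow>\<^sub>0 nat"
type_synonym qpoly = "mon \<Rightarrow> rat"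

definition scaleQ :: "rat \<Rightarrow> qpoly \<Rightarrow> qpoly" where
  "scaleQ c p = (\<lambda>\<mu>. c * p \<mu>)"

definition monoP :: "mon \<Rightarrow> qpoly" where
  "monoP e = (\<lambda>\<mu>. if \<mu> = e then 1 else 0)"

definition xexp :: "nat set \<Rightarrow> mon" where
  "xexp F = (\<Sum>j\<in>F. Poly_Mapping.single (Inl j) 1)"

text \<open>Total degree of a monomial and of a polynomial (degree of 0 taken as 0).\<close>
definition tdeg :: "mon \<Rightarrow> nat" where
  "tdeg \<mu> = (\<Sum>v\<in>Poly_Mapping.keys \<mu>. Poly_Mapping.lookup \<mu> v)"

definition pdeg :: "qpoly \<Rightarrow> nat" where
  "pdeg p = Max (insert 0 {tdeg \<mu> | \<mu>. p \<mu> \<noteq> 0})"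

definition pderivQ :: "var \<Rightarrow> qpoly \<Rightarrow> qpoly" where
  "pderivQ v p = (\<lambda>\<mu>. of_nat (Poly_Mapping.lookup \<mu> v + 1) * p (\<mu> + Poly_Mapping.single v 1))"

definition pderivs :: "var list \<Rightarrow> qpoly \<Rightarrow> qpoly" where
  "pderivs vs p = fold pderivQ vs p"

text \<open>The space of partial derivatives of order r, 1 <= r <= deg f - 1, as a spanning set.\<close>
definition partials_plus :: "qpoly \<Rightarrow> qpoly set" where
  "partials_plus f = {pderivs vs f | vs. 1 \<le> length vs \<and> length vs \<le> pdeg f - 1}"

definition dF :: "nat set \<Rightarrow> qpoly \<Rightarrow> qpoly" where
  "dF F f = pderivs (map Inl (sorted_list_of_set F)) f"

definition gen_complex :: "nat \<Rightarrow> (nat \<Rightarrow> nat set) \<Rightarrow> nat set set" where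
  "gen_complex m F = {Y. Y \<noteq> {} \<and> (\<exists>i\<in>{1..m}. Y \<subseteq> F i)}"

definition fpoly :: "nat \<Rightarrow> (nat \<Rightarrow> nat set) \<Rightarrow> qpoly" where
  "fpoly m F = (\<Sum>i\<in>{1..m}. monoP (Poly_Mapping.single (Inr i) 1 + xexp (F i)))"

end

theory Submission
  imports Defs
begin

lemma sum_fun_at: "(sum g I :: qpoly) x = (\<Sum>i\<in>I. g i x)"
  by (induction I rule: infinite_finite_induct) auto

definition sq :: "var set \<Rightarrow> mon" where "sq S = (\<Sum>v\<in>S. Poly_Mapping.single v 1)"

lemma lookup_sq: "finite S \<Longrightarrow> Poly_Mapping.lookup (sq S) w = (if w \<in> S then 1 else 0)"
  unfolding sq_def lookup_sum lookup_single by (simp add: when_def)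

lemma sq_inj: "finite A \<Longrightarrow> finite B \<Longrightarrow> sq A = sq B \<Longrightarrow> A = B"
proof -
  assume a: "finite A" "finite B" "sq A = sq B"
  have "(w \<in> A) = (w \<in> B)" for w
    using arg_cong[OF a(3), of "\<lambda>p. Poly_Mapping.lookup p w"] a(1,2) by (auto simp: lookup_sq split: if_splits)
  then show ?thesis by blast
qed

lemma tdeg_sq: "finite S \<Longrightarrow> tdeg (sq S) = card S"
proof -
  assume f: "finite S"
  have k: "Poly_Mapping.keys (sq S) = S" using f by (auto simp: in_keys_iff lookup_sq split: if_splits)
  show ?thesis unfolding tdeg_def k using f by (simp add: lookup_sq)
qed

lemma sq_eq_iff: "finite S \<Longrightarrow> (\<mu> + Poly_Mapping.single v 1 = sq S) \<longleftrightarrow> (v \<in> S \<and> \<mu> = sq (S - {v}))"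
proof
  assume f: "finite S" and e: "\<mu> + Poly_Mapping.single v 1 = sq S"
  have l: "Poly_Mapping.lookup \<mu> w + (if v = w then 1 else 0) = (if w \<in> S then 1 else 0)" for w
    using arg_cong[OF e, of "\<lambda>p. Poly_Mapping.lookup p w"] f
    by (simp only: lookup_add lookup_sq[OF f] lookup_single when_def)
  from l[of v] have v: "v \<in> S" by (auto split: if_splits)
  have "Poly_Mapping.lookup \<mu> w = Poly_Mapping.lookup (sq (S - {v})) w" for w
  proof (cases "v = w")
    case True then show ?thesis using l[of w] v f by (simp add: lookup_sq)
  next
    case False then show ?thesis using l[of w] f by (simp add: lookup_sq)
  qed
  then have "\<mu> = sq (S - {v})" by (rule poly_mapping_eqI)
  with v show "v \<in> S \<and> \<mu> = sq (S - {v})" by blast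
next
  assume f: "finite S" and h: "v \<in> S \<and> \<mu> = sq (S - {v})"
  show "\<mu> + Poly_Mapping.single v 1 = sq S"
    by (rule poly_mapping_eqI) (use h f in \<open>auto simp: lookup_add lookup_sq lookup_single when_def\<close>)
qed

lemma pderivQ_sq: "finite S \<Longrightarrow> pderivQ v (monoP (sq S)) = (if v \<in> S then monoP (sq (S - {v})) else 0)"
proof (rule ext)
  fix \<mu> assume f: "finite S"
  have "pderivQ v (monoP (sq S)) \<mu> = of_nat (Poly_Mapping.lookup \<mu> v + 1) * (if v \<in> S \<and> \<mu> = sq (S - {v}) then 1 else 0)"
    unfolding pderivQ_def monoP_def sq_eq_iff[OF f] ..
  also have "\<dots> = (if v \<in> S then monoP (sq (S - {v})) else 0) \<mu>"
    using f by (auto simp: monoP_def lookup_sq)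
  finally show "pderivQ v (monoP (sq S)) \<mu> = (if v \<in> S then monoP (sq (S - {v})) else 0) \<mu>" .
qed

lemma pderivQ_add: "pderivQ v (p + q) = pderivQ v p + pderivQ v q"
  by (rule ext) (simp add: pderivQ_def algebra_simps)
lemma pderivQ_zero: "pderivQ v 0 = 0"
  by (rule ext) (simp add: pderivQ_def)
lemma pderivQ_sum: "pderivQ v (sum g I) = (\<Sum>i\<in>I. pderivQ v (g i))"
proof (induction I rule: infinite_finite_induct)
  case (infinite A) then show ?case by (simp only: sum.infinite[OF infinite] pderivQ_zero)
next
  case empty then show ?case by (simp only: sum.empty pderivQ_zero)
next
  case (insert x F) then show ?case by (simp only: sum.insert[OF insert(1,2)] pderivQ_add)
qed
lemma pderivs_Cons: "pderivs (v # vs) p = pderivs vs (pderivQ v p)"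
  by (simp add: pderivs_def)
lemma pderivs_zero: "pderivs vs 0 = 0"
proof (induction vs)
  case Nil then show ?case by (simp add: pderivs_def)
next
  case (Cons a vs) then show ?case by (simp only: pderivs_Cons pderivQ_zero)
qed
lemma pderivs_sum: "pderivs vs (sum g I) = (\<Sum>i\<in>I. pderivs vs (g i))"
  by (induction vs arbitrary: g) (auto simp: pderivs_Cons pderivQ_sum, simp_all add: pderivs_def)

lemma pderivs_sq: "finite S \<Longrightarrow> pderivs vs (monoP (sq S)) =
   (if distinct vs \<and> set vs \<subseteq> S then monoP (sq (S - set vs)) else 0)"
proof (induction vs arbitrary: S)
  case Nil then show ?case by (simp add: pderivs_def)
next
  case (Cons v vs)
  show ?case
  proof (cases "v \<in> S")
    case True
    then show ?thesis using Cons.IH[of "S - {v}"] Cons.prems True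
      by (auto simp: pderivs_Cons pderivQ_sq Diff_insert2[symmetric] insert_commute)
  next
    case False
    then show ?thesis using Cons.prems by (simp add: pderivs_Cons pderivQ_sq pderivs_zero)
  qed
qed
lemma vs_scaleQ: "vector_space scaleQ"
  by unfold_locales (auto simp: scaleQ_def algebra_simps)

lemma module_scaleQ: "module scaleQ"
  by unfold_locales (auto simp: scaleQ_def algebra_simps)

lemma indep_witness:
  fixes g :: "'i \<Rightarrow> qpoly" and w :: "'i \<Rightarrow> mon"
  assumes nz: "\<And>a. a \<in> I \<Longrightarrow> g a (w a) \<noteq> 0"
    and z: "\<And>a b. a \<in> I \<Longrightarrow> b \<in> I \<Longrightarrow> b \<noteq> a \<Longrightarrow> g b (w a) = 0"
  shows "inj_on g I" "\<not> module.dependent scaleQ (g ` I)"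
proof -
  show "inj_on g I"
    by (rule inj_onI) (metis nz z)
  interpret M: module scaleQ by (rule module_scaleQ)
  show "\<not> M.dependent (g ` I)"
  proof
    assume "M.dependent (g ` I)"
    then obtain t u v where t: "finite t" "t \<subseteq> g ` I" "(\<Sum>v\<in>t. scaleQ (u v) v) = 0"
      and v: "v \<in> t" "u v \<noteq> 0"
      unfolding M.dependent_explicit by blast
    obtain a where a: "a \<in> I" "v = g a" using v t by blast
    have "0 = (\<Sum>x\<in>t. scaleQ (u x) x) (w a)" using t by simp
    also have "\<dots> = (\<Sum>x\<in>t. u x * x (w a))" by (simp add: sum_fun_at scaleQ_def)
    also have "\<dots> = u v * v (w a) + (\<Sum>x\<in>t - {v}. u x * x (w a))"
      using t(1) v(1) by (simp add: sum.remove)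
    also have "(\<Sum>x\<in>t - {v}. u x * x (w a)) = 0"
    proof (rule sum.neutral, rule ballI)
      fix x assume x: "x \<in> t - {v}"
      then obtain b where "b \<in> I" "x = g b" using t by blast
      with x a z[of a b] show "u x * x (w a) = 0" by auto
    qed
    finally have "u v * g a (w a) = 0" using a by simp
    with v nz[OF a(1)] show False by simp
  qed
qed

definition Tset :: "(nat \<Rightarrow> nat set) \<Rightarrow> nat \<Rightarrow> var set" where
  "Tset F i = insert (Inr i) (Inl ` F i)"

definition PV :: "nat \<Rightarrow> (nat \<Rightarrow> nat set) \<Rightarrow> var set \<Rightarrow> qpoly" where
  "PV m F V = (\<Sum>i\<in>{1..m}. if V \<subseteq> Tset F i then monoP (sq (Tset F i - V)) else 0)"

lemma xexp_sq: "xexp G = sq (Inl ` G)"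
  unfolding xexp_def sq_def by (simp add: sum.reindex)

lemma fin_T: "finite G \<Longrightarrow> finite (Tset (\<lambda>_. G) i)" by (simp add: Tset_def)

lemma fpoly_eq:
  assumes fin: "\<forall>i\<in>{1..m}. finite (F i)"
  shows "fpoly m F = (\<Sum>i\<in>{1..m}. monoP (sq (Tset F i)))"
  unfolding fpoly_def
proof (rule sum.cong[OF refl])
  fix i assume i: "i \<in> {1..m}"
  have "sq (Tset F i) = Poly_Mapping.single (Inr i) 1 + sq (Inl ` F i)"
    unfolding Tset_def sq_def using bspec[OF fin i] by (subst sum.insert) auto
  then show "monoP (Poly_Mapping.single (Inr i) 1 + xexp (F i)) = monoP (sq (Tset F i))"
    by (simp add: xexp_sq)
qed


lemma pderivs_f:
  assumes fin: "\<forall>i\<in>{1..m}. finite (F i)"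
  shows "pderivs vs (fpoly m F) = (if distinct vs then PV m F (set vs) else 0)"
proof -
  have "pderivs vs (fpoly m F) = (\<Sum>i\<in>{1..m}. pderivs vs (monoP (sq (Tset F i))))"
    unfolding fpoly_eq[OF fin] pderivs_sum ..
  also have "\<dots> = (\<Sum>i\<in>{1..m}. if distinct vs \<and> set vs \<subseteq> Tset F i then monoP (sq (Tset F i - set vs)) else 0)"
    by (rule sum.cong[OF refl]) (simp add: pderivs_sq fin Tset_def)
  also have "\<dots> = (if distinct vs then PV m F (set vs) else 0)"
    unfolding PV_def by (cases "distinct vs") auto
  finally show ?thesis .
qed

lemma dF_eq:
  assumes fin: "\<forall>i\<in>{1..m}. finite (F i)" and G: "finite G"
  shows "dF G (fpoly m F) = PV m F (Inl ` G)"
  unfolding dF_def pderivs_f[OF fin] using G by (simp add: distinct_map)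

lemma PV_Inr:
  assumes "Inr k \<in> V"
  shows "PV m F V = (if k \<in> {1..m} \<and> V \<subseteq> Tset F k then monoP (sq (Tset F k - V)) else 0)"
proof -
  have "PV m F V = (\<Sum>i\<in>{1..m}. if i = k then (if V \<subseteq> Tset F k then monoP (sq (Tset F k - V)) else 0) else 0)"
    unfolding PV_def by (rule sum.cong[OF refl]) (use assms in \<open>auto simp: Tset_def\<close>)
  then show ?thesis by (simp add: sum.delta)
qed

lemma PV_at: "PV m F V \<mu> = (\<Sum>i\<in>{1..m}. if V \<subseteq> Tset F i \<and> \<mu> = sq (Tset F i - V) then 1 else 0)"
  unfolding PV_def sum_fun_at by (rule sum.cong[OF refl]) (auto simp: monoP_def)

lemma fpoly_at:
  assumes fin: "\<forall>i\<in>{1..m}. finite (F i)"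
  shows "fpoly m F \<mu> \<noteq> 0 \<longleftrightarrow> (\<exists>i\<in>{1..m}. \<mu> = sq (Tset F i))"
proof -
  have "fpoly m F \<mu> = (\<Sum>i\<in>{1..m}. if \<mu> = sq (Tset F i) then 1 else 0)"
    unfolding fpoly_eq[OF fin] sum_fun_at by (rule sum.cong[OF refl]) (auto simp: monoP_def)
  then show ?thesis by (simp add: sum_nonneg_eq_0_iff)
qed

lemma pdeg_f:
  assumes F: "\<forall>i\<in>{1..m}. F i \<subseteq> {1..n} \<and> card (F i) = d"
  shows "pdeg (fpoly m F) = (if m = 0 then 0 else d + 1)"
proof -
  have fin: "\<forall>i\<in>{1..m}. finite (F i)" using F finite_subset by blast
  have c: "card (Tset F i) = d + 1" if "i \<in> {1..m}" for i
  proof -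
    have "card (Tset F i) = Suc (card (Inl ` F i :: var set))"
      unfolding Tset_def using bspec[OF fin that] by (subst card_insert_disjoint) auto
    also have "card (Inl ` F i :: var set) = card (F i)" by (rule card_image) simp
    finally show ?thesis using F that by simp
  qed
  have ft: "finite (Tset F i)" if "i \<in> {1..m}" for i using bspec[OF fin that] by (simp add: Tset_def)
  have S: "{tdeg \<mu> | \<mu>. fpoly m F \<mu> \<noteq> 0} = (if m = 0 then {} else {d+1})"
  proof (cases "m = 0")
    case True then show ?thesis using fpoly_at[OF fin] by auto
  next
    case False
    have "{tdeg \<mu> | \<mu>. fpoly m F \<mu> \<noteq> 0} = {d+1}"
    proof (intro equalityI subsetI)
      fix x assume "x \<in> {tdeg \<mu> | \<mu>. fpoly m F \<mu> \<noteq> 0}"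
      then show "x \<in> {d+1}" by (auto simp: fpoly_at[OF fin] tdeg_sq ft c)
    next
      fix x assume "x \<in> {d+1}"
      then have "x = tdeg (sq (Tset F 1))" "fpoly m F (sq (Tset F 1)) \<noteq> 0"
        using False by (auto simp: tdeg_sq ft c fpoly_at[OF fin])
      then show "x \<in> {tdeg \<mu> | \<mu>. fpoly m F \<mu> \<noteq> 0}" by blast
    qed
    then show ?thesis using False by simp
  qed
  show ?thesis unfolding pdeg_def S by simp
qed

lemma sq_eq: "finite A \<Longrightarrow> finite B \<Longrightarrow> sq A = sq B \<longleftrightarrow> A = B"
  using sq_inj by blast

lemma T_minus: "Tset F i - Inl ` G = insert (Inr i) (Inl ` (F i - G))"
  unfolding Tset_def by auto

lemma Inl_sub_T: "(Inl ` G \<subseteq> Tset F i) \<longleftrightarrow> G \<subseteq> F i"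
  unfolding Tset_def by auto

theorem lemma6:
  fixes n m d :: nat and F :: "nat \<Rightarrow> nat set"
  assumes "\<forall>i\<in>{1..m}. F i \<subseteq> {1..n} \<and> card (F i) = d"
  defines "\<Delta> \<equiv> gen_complex m F"
    and "f \<equiv> fpoly m F"
    and "B \<equiv> (\<lambda>Y. monoP (xexp Y)) ` gen_complex m F \<union> (\<lambda>Y. dF Y (fpoly m F)) ` gen_complex m F"
  shows "card B = 2 * card \<Delta>
     \<and> \<not> module.dependent scaleQ B
     \<and> module.span scaleQ B = module.span scaleQ (partials_plus f)
     \<and> vector_space.dim scaleQ (partials_plus f) = 2 * card \<Delta>"
proof -
  interpret V: vector_space scaleQ by (rule vs_scaleQ)
  define D where "D = gen_complex m F"
  define fp where "fp = fpoly m F"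
  have fin: "\<forall>i\<in>{1..m}. finite (F i)" using assms(1) finite_subset by blast
  have cardF: "\<And>i. i \<in> {1..m} \<Longrightarrow> card (F i) = d" using assms(1) by blast
  have finFi: "\<And>i. i \<in> {1..m} \<Longrightarrow> finite (F i)" using fin by blast
  have finD: "finite D"
  proof (rule finite_subset)
    show "D \<subseteq> Pow {1..n}" using assms(1) by (auto simp: D_def gen_complex_def)
  qed simp
  have faceI: "\<And>G k. G \<noteq> {} \<Longrightarrow> k \<in> {1..m} \<Longrightarrow> G \<subseteq> F k \<Longrightarrow> G \<in> D"
    by (auto simp: D_def gen_complex_def)
  define kk where "kk G = (SOME k. k \<in> {1..m} \<and> G \<subseteq> F k)" for G
  have kk: "kk G \<in> {1..m} \<and> G \<subseteq> F (kk G)" if "G \<in> D" for G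
  proof -
    have "\<exists>k. k \<in> {1..m} \<and> G \<subseteq> F k" using that by (auto simp: D_def gen_complex_def)
    then show ?thesis unfolding kk_def by (rule someI_ex)
  qed
  have neD: "G \<noteq> {}" if "G \<in> D" for G using that by (auto simp: D_def gen_complex_def)
  have finG: "finite G" if "G \<in> D" for G using kk[OF that] finFi finite_subset by blast
  have cardG: "1 \<le> card G \<and> card G \<le> d" if "G \<in> D" for G
  proof -
    have "card G \<le> card (F (kk G))" using kk[OF that] finFi by (intro card_mono) auto
    moreover have "card G \<noteq> 0" using finG[OF that] neD[OF that] by simp
    ultimately show ?thesis using cardF kk[OF that] by auto
  qed
  have pdeg: "pdeg fp = (if m = 0 then 0 else d + 1)" unfolding fp_def by (rule pdeg_f[OF assms(1)])

  define g :: "nat set + nat set \<Rightarrow> qpoly" where "g = case_sum (\<lambda>G. monoP (xexp G)) (\<lambda>G. dF G fp)"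
  define w :: "nat set + nat set \<Rightarrow> mon" where "w = case_sum (\<lambda>G. sq (Inl ` G)) (\<lambda>G. sq (Tset F (kk G) - Inl ` G))"
  define I where "I = D <+> D"
  have Beq: "B = g ` I"
    unfolding B_def I_def g_def D_def fp_def Plus_def image_Un image_image by simp

  have gv1: "g (Inl G) \<mu> = (if \<mu> = sq (Inl ` G) then 1 else 0)" for G \<mu>
    by (simp add: g_def xexp_sq monoP_def)
  have gv2: "g (Inr G) \<mu> = (\<Sum>i\<in>{1..m}. if G \<subseteq> F i \<and> \<mu> = sq (insert (Inr i) (Inl ` (F i - G))) then 1 else 0)"
    if "G \<in> D" for G \<mu>
    using finG[OF that] by (simp add: g_def fp_def dF_eq[OF fin] PV_at T_minus Inl_sub_T)

  have nz: "g a (w a) \<noteq> 0" if "a \<in> I" for a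
  proof (cases a)
    case (Inl G) then show ?thesis by (simp add: gv1 w_def)
  next
    case (Inr G)
    with that have G: "G \<in> D" by (auto simp: I_def)
    let ?k = "kk G"
    let ?h = "\<lambda>i. if G \<subseteq> F i \<and> sq (insert (Inr ?k) (Inl ` (F ?k - G))) = sq (insert (Inr i) (Inl ` (F i - G))) then (1::rat) else 0"
    have "?h ?k \<le> sum ?h {1..m}"
      by (rule member_le_sum) (use kk[OF G] in auto)
    moreover have "?h ?k = 1" using kk[OF G] by simp
    ultimately show ?thesis using Inr G by (simp add: gv2 w_def T_minus)
  qed
  have z: "g b (w a) = 0" if "a \<in> I" "b \<in> I" "b \<noteq> a" for a b
  proof (cases a)
    case (Inl G)
    then have G: "G \<in> D" using that by (auto simp: I_def)
    show ?thesis
    proof (cases b)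
      case (Inl G')
      then have G': "G' \<in> D" using that by (auto simp: I_def)
      have "sq (Inl ` G) \<noteq> sq (Inl ` G')"
      proof
        assume "sq (Inl ` G) = sq (Inl ` G')"
        then have "(Inl ` G :: var set) = Inl ` G'" using finG[OF G] finG[OF G'] by (simp add: sq_eq)
        then have "G = G'" by (metis inj_Inl inj_image_eq_iff)
        then show False using that Inl \<open>a = Inl G\<close> by simp
      qed
      then show ?thesis using Inl \<open>a = Inl G\<close> by (simp add: gv1 w_def)
    next
      case (Inr G')
      then have G': "G' \<in> D" using that by (auto simp: I_def)
      have "sq (Inl ` G) \<noteq> sq (insert (Inr i) (Inl ` (F i - G')))" if "i \<in> {1..m}" for i
        using finG[OF G] finFi[OF that] by (subst sq_eq) auto
      then show ?thesis using Inr \<open>a = Inl G\<close> G' by (simp add: gv2 w_def)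
    qed
  next
    case (Inr G)
    then have G: "G \<in> D" using that by (auto simp: I_def)
    let ?k = "kk G"
    have k: "?k \<in> {1..m}" "G \<subseteq> F ?k" using kk[OF G] by auto
    show ?thesis
    proof (cases b)
      case (Inl G')
      then have G': "G' \<in> D" using that by (auto simp: I_def)
      have "sq (Tset F ?k - Inl ` G) \<noteq> sq (Inl ` G')"
        using finG[OF G'] finFi[OF k(1)] by (subst sq_eq) (auto simp: T_minus)
      then show ?thesis using Inl \<open>a = Inr G\<close> by (simp add: gv1 w_def)
    next
      case (Inr G')
      then have G': "G' \<in> D" using that by (auto simp: I_def)
      have "\<not> (G' \<subseteq> F i \<and> sq (Tset F ?k - Inl ` G) = sq (insert (Inr i) (Inl ` (F i - G'))))"
        if i: "i \<in> {1..m}" for i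
      proof
        assume h: "G' \<subseteq> F i \<and> sq (Tset F ?k - Inl ` G) = sq (insert (Inr i) (Inl ` (F i - G')))"
        then have e: "insert (Inr ?k) (Inl ` (F ?k - G)) = (insert (Inr i) (Inl ` (F i - G')) :: var set)"
          using finFi[OF k(1)] finFi[OF i] by (simp add: sq_eq T_minus)
        then have ik: "i = ?k" by blast
        from e have "(Inl ` (F ?k - G) :: var set) = Inl ` (F ?k - G')" unfolding ik by blast
        then have "F ?k - G = F ?k - G'" by (metis inj_Inl inj_image_eq_iff)
        with k(2) h ik have "G = G'" by blast
        then show False using \<open>b \<noteq> a\<close> Inr \<open>a = Inr G\<close> by simp
      qed
      then show ?thesis using Inr \<open>a = Inr G\<close> G' by (simp add: gv2 w_def, intro sum.neutral) auto
    qed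
  qed
  have inj: "inj_on g I" and indep: "\<not> V.dependent (g ` I)"
    using indep_witness[of I g w] nz z by auto
  have cardB: "card B = 2 * card \<Delta>"
  proof -
    have "card B = card I" unfolding Beq by (rule card_image[OF inj])
    also have "\<dots> = 2 * card D" unfolding I_def using finD by (simp add: card_Plus)
    finally show ?thesis unfolding \<Delta>_def D_def .
  qed

  have sub1: "partials_plus fp \<subseteq> V.span B"
  proof
    fix p assume "p \<in> partials_plus fp"
    then obtain vs where p: "p = pderivs vs fp" and l1: "1 \<le> length vs" and l2: "length vs \<le> pdeg fp - 1"
      unfolding partials_plus_def by blast
    have ld: "length vs \<le> d" using l1 l2 pdeg by (auto split: if_splits)
    show "p \<in> V.span B"
    proof (cases "distinct vs")
      case False then show ?thesis using p by (simp add: fp_def pderivs_f[OF fin] V.span_zero)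
    next
      case True
      define Vs where "Vs = set vs"
      have pV: "p = PV m F Vs" using p True by (simp add: fp_def pderivs_f[OF fin] Vs_def)
      have cV: "card Vs = length vs" using True by (simp add: Vs_def distinct_card)
      show ?thesis
      proof (cases "\<exists>k. Inr k \<in> Vs")
        case True
        then obtain k where kV: "Inr k \<in> Vs" by blast
        show ?thesis
        proof (cases "k \<in> {1..m} \<and> Vs \<subseteq> Tset F k")
          case False
          have "p = 0" unfolding pV PV_Inr[OF kV] if_not_P[OF False] ..
          then show ?thesis by (simp add: V.span_zero)
        next
          case True
          then have k: "k \<in> {1..m}" and VT: "Vs \<subseteq> Tset F k" by auto
          define G where "G = {j. Inl j \<in> Vs}"
          have VG: "Vs = insert (Inr k) (Inl ` G)"
          proof (intro equalityI subsetI)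
            fix x assume x: "x \<in> Vs"
            then have "x \<in> Tset F k" using VT by blast
            then show "x \<in> insert (Inr k) (Inl ` G)" using x by (auto simp: Tset_def G_def)
          qed (use kV G_def in auto)
          have GF: "G \<subseteq> F k" using VT by (auto simp: G_def Tset_def)
          have fG: "finite G" using GF finFi[OF k] finite_subset by blast
          have "card Vs = Suc (card G)" unfolding VG using fG
            by (subst card_insert_disjoint) (auto simp: card_image)
          then have "card G < card (F k)" using cV ld cardF[OF k] by simp
          have ne: "F k - G \<noteq> {}"
          proof
            assume "F k - G = {}"
            then have "F k \<subseteq> G" by blast
            then have "card (F k) \<le> card G" by (rule card_mono[OF fG])
            with \<open>card G < card (F k)\<close> show False by simp
          qed
          have TV: "Tset F k - Vs = Inl ` (F k - G)" unfolding VG Tset_def by auto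
          have "p = monoP (xexp (F k - G))" unfolding pV PV_Inr[OF kV] if_P[OF True] TV xexp_sq ..
          moreover have "F k - G \<in> D" using faceI[OF ne k] by blast
          ultimately have "p \<in> B" unfolding B_def D_def by blast
          then show ?thesis by (rule V.span_base)
        qed
      next
        case False
        define G where "G = {j. Inl j \<in> Vs}"
        have VG: "Vs = Inl ` G"
        proof (intro equalityI subsetI)
          fix x assume x: "x \<in> Vs"
          then show "x \<in> Inl ` G" using False by (cases x) (auto simp: G_def)
        qed (auto simp: G_def)
        have fG: "finite G" unfolding G_def Vs_def
          by (rule finite_vimageI[of "set vs" Inl, unfolded vimage_def]) auto
        have pG: "p = dF G fp" using pV VG by (simp add: fp_def dF_eq[OF fin fG])
        show ?thesis
        proof (cases "G \<in> D")
          case True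
          then have "p \<in> B" using pG unfolding B_def D_def fp_def by blast
          then show ?thesis by (rule V.span_base)
        next
          case False
          have "Vs \<noteq> {}" using l1 Vs_def by auto
          then have "G \<noteq> {}" using VG by auto
          then have nsub: "\<And>i. i \<in> {1..m} \<Longrightarrow> \<not> G \<subseteq> F i" using False faceI by blast
          have "p = 0" unfolding pV PV_def VG Inl_sub_T
            by (rule sum.neutral) (use nsub in auto)
          then show ?thesis by (simp add: V.span_zero)
        qed
      qed
    qed
  qed
  have sub2: "B \<subseteq> V.span (partials_plus fp)"
  proof
    fix b assume "b \<in> B"
    then obtain G where G: "G \<in> D" and b: "b = monoP (xexp G) \<or> b = dF G fp"
      unfolding B_def D_def fp_def by blast
    let ?k = "kk G"
    have k: "?k \<in> {1..m}" "G \<subseteq> F ?k" using kk[OF G] by auto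
    then have m0: "m \<noteq> 0" by auto
    have pd: "pdeg fp - 1 = d" using pdeg m0 by simp
    have "b \<in> partials_plus fp"
      using b
    proof
      assume b: "b = monoP (xexp G)"
      define Vs where "Vs = insert (Inr ?k) (Inl ` (F ?k - G))"
      have fV: "finite Vs" using finFi[OF k(1)] by (simp add: Vs_def)
      obtain vs where vs: "set vs = Vs" "distinct vs" using finite_distinct_list[OF fV] by blast
      have "card (F ?k - G) = d - card G" using k finFi[OF k(1)] cardF[OF k(1)]
        by (simp add: card_Diff_subset finite_subset)
      then have "card Vs = Suc (d - card G)" unfolding Vs_def using finFi[OF k(1)]
        by (subst card_insert_disjoint) (auto simp: card_image)
      then have lv: "1 \<le> length vs \<and> length vs \<le> d"
        using cardG[OF G] vs distinct_card[OF vs(2)] by auto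
      have "Vs \<subseteq> Tset F ?k" using k by (auto simp: Vs_def Tset_def)
      moreover have "Tset F ?k - Vs = Inl ` G" using k by (auto simp: Vs_def Tset_def)
      ultimately have "pderivs vs fp = b"
        using vs k b by (simp add: fp_def pderivs_f[OF fin] PV_Inr[of ?k] Vs_def xexp_sq)
      then show ?thesis using lv pd unfolding partials_plus_def by force
    next
      assume b: "b = dF G fp"
      have "b = pderivs (map Inl (sorted_list_of_set G)) fp" unfolding b dF_def ..
      moreover have "length (map Inl (sorted_list_of_set G)) = card G" by simp
      ultimately show ?thesis using cardG[OF G] pd unfolding partials_plus_def by force
    qed
    then show "b \<in> V.span (partials_plus fp)" by (rule V.span_base)
  qed
  have spanEq: "V.span B = V.span (partials_plus fp)"
    using sub1 sub2 V.span_eq by blast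
  have "V.dim (partials_plus fp) = card B"
    by (metis V.dim_span spanEq V.dim_eq_card_independent indep Beq)
  then show ?thesis using cardB spanEq indep Beq unfolding f_def fp_def by simp
qed

end
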